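(* For $n\ge 1$, $\left|\Pi_n\wr C_2(1^12^1,1^22^1)\right|=2^n+n-1$.
   Context: For $n\ge0$ let $[n]=\{1,\dots,n\}$. A $2$-colored set partition of $[n]$ is a set partition of $[n]$ together with an assignment of a color from $\{1,2\}$ to each element; $\Pi_n\wr C_2$ is the set of these. For a set $S$ of patterns, $\Pi_n\wr C_2(S)$ is the set of such colored partitions avoiding every pattern in $S$ in the pattern sense. For the two patterns used here: $\sigma$ contains $1^12^1$ iff there are two elements in different blocks with the same color; $\sigma$ contains $1^22^1$ iff there are $i<j$ in different blocks with $i$ colored $2$ and $j$ colored $1$. *)

theory Defs
  imports Main "HOL-Library.Disjoint_Sets" "HOL-Library.FuncSet"
begin

definition colored_partitions :: "nat \<Rightarrow> (nat set set \<times> (nat \<Rightarrow> nat)) set" where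
  "colored_partitions n =
     {(P, c). partition_on {1..n} P \<and> c \<in> {1..n} \<rightarrow>\<^sub>E {1, 2}}"

definition same_block :: "nat set set \<Rightarrow> nat \<Rightarrow> nat \<Rightarrow> bool" where
  "same_block P i j \<longleftrightarrow> (\<exists>B\<in>P. i \<in> B \<and> j \<in> B)"

definition contains_p11_21 :: "nat set set \<times> (nat \<Rightarrow> nat) \<Rightarrow> bool" where
  "contains_p11_21 \<sigma> = (case \<sigma> of (P, c) \<Rightarrow>
     (\<exists>i\<in>\<Union>P. \<exists>j\<in>\<Union>P. \<not> same_block P i j \<and> c i = c j))"

definition contains_p12_21 :: "nat set set \<times> (nat \<Rightarrow> nat) \<Rightarrow> bool" where
  "contains_p12_21 \<sigma> = (case \<sigma> of (P, c) \<Rightarrow>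
     (\<exists>i\<in>\<Union>P. \<exists>j\<in>\<Union>P. i < j \<and> \<not> same_block P i j \<and> c i = 2 \<and> c j = 1))"

end

theory Submission
  imports Defs
begin

definition ck :: "nat \<Rightarrow> nat \<Rightarrow> nat \<Rightarrow> nat" where
  "ck n k = (\<lambda>i. if i \<in> {1..n} then (if i \<le> k then 1 else 2) else undefined)"

lemma sb_trans:
  assumes "disjoint P" "same_block P i j" "same_block P j k"
  shows "same_block P i k"
  using assms unfolding same_block_def disjoint_def by blast

lemma fwd:
  assumes pp: "partition_on {1..n} P" and cc: "c \<in> {1..n} \<rightarrow>\<^sub>E {1, 2}"
    and n1: "\<not> contains_p11_21 (P, c)" and n2: "\<not> contains_p12_21 (P, c)"
    and ns: "P \<noteq> {{1..n}}" and nn: "1 \<le> n"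
  shows "\<exists>k\<in>{1..<n}. P = {{1..k},{Suc k..n}} \<and> c = ck n k"
proof -
  have U: "\<Union>P = {1..n}" and E: "{} \<notin> P" and D: "disjoint P"
    using pp unfolding partition_on_def by auto
  have col: "\<And>i. i \<in> {1..n} \<Longrightarrow> c i = 1 \<or> c i = 2" using cc by auto
  have eqsb: "\<And>i j. i \<in> {1..n} \<Longrightarrow> j \<in> {1..n} \<Longrightarrow> c i = c j \<Longrightarrow> same_block P i j"
  proof -
    fix i j assume "i \<in> {1..n}" "j \<in> {1..n}" "c i = c j"
    then have "i \<in> \<Union>P" "j \<in> \<Union>P" using U by auto
    then show "same_block P i j" using n1 \<open>c i = c j\<close> unfolding contains_p11_21_def by auto
  qed
  have sbeq: "c i = c j" if i: "i \<in> {1..n}" and j: "j \<in> {1..n}" and s: "same_block P i j" for i j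
  proof (rule ccontr)
    assume ne: "c i \<noteq> c j"
    have all: "same_block P x i" if x: "x \<in> {1..n}" for x
    proof -
      have "c x = c i \<or> c x = c j" using col[OF x] col[OF i] col[OF j] ne by auto
      then show ?thesis
      proof
        assume "c x = c i" then show ?thesis using eqsb x i by blast
      next
        assume "c x = c j" then have "same_block P x j" using eqsb x j by blast
        moreover have "same_block P j i" using s unfolding same_block_def by blast
        ultimately show ?thesis using sb_trans[OF D] by blast
      qed
    qed
    obtain X where X: "X \<in> P" "i \<in> X" using i U by blast
    have "{1..n} \<subseteq> X"
    proof
      fix x assume x: "x \<in> {1..n}"
      then obtain Y where "Y \<in> P" "x \<in> Y" "i \<in> Y" using all[OF x] unfolding same_block_def by blast
      then have "Y = X" using X D unfolding disjoint_def by blast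
      then show "x \<in> X" using \<open>x \<in> Y\<close> by simp
    qed
    then have XU: "X = {1..n}" using X U by blast
    have "P = {{1..n}}"
    proof
      show "P \<subseteq> {{1..n}}"
      proof
        fix Y assume Y: "Y \<in> P"
        then obtain y where "y \<in> Y" using E by (metis all_not_in_conv)
        then have "y \<in> X" using Y U XU by blast
        then have "Y = X" using Y X \<open>y \<in> Y\<close> D unfolding disjoint_def by blast
        then show "Y \<in> {{1..n}}" using XU by simp
      qed
    qed (use X XU in auto)
    then show False using ns by simp
  qed
  define A where "A = {i \<in> {1..n}. c i = 1}"
  define B where "B = {i \<in> {1..n}. c i = 2}"
  have blk: "X = A \<or> X = B" "X \<noteq> {}" if X: "X \<in> P" for X
  proof -
    obtain x where x: "x \<in> X" using E X by (metis all_not_in_conv)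
    have xn: "x \<in> {1..n}" using x X U by blast
    have "X = {j \<in> {1..n}. c j = c x}"
    proof
      show "X \<subseteq> {j \<in> {1..n}. c j = c x}"
      proof
        fix j assume j: "j \<in> X"
        then have jn: "j \<in> {1..n}" using X U by blast
        have "same_block P j x" using j x X unfolding same_block_def by blast
        then show "j \<in> {j \<in> {1..n}. c j = c x}" using sbeq[OF jn xn] jn by simp
      qed
    next
      show "{j \<in> {1..n}. c j = c x} \<subseteq> X"
      proof
        fix j assume j: "j \<in> {j \<in> {1..n}. c j = c x}"
        then obtain Y where "Y \<in> P" "j \<in> Y" "x \<in> Y" using eqsb[of j x] xn unfolding same_block_def by auto
        then have "Y = X" using X x D unfolding disjoint_def by blast
        then show "j \<in> X" using \<open>j \<in> Y\<close> by simp
      qed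
    qed
    then show "X = A \<or> X = B" using col[OF xn] unfolding A_def B_def by auto
    show "X \<noteq> {}" using x by auto
  qed
  have inP: "{j \<in> {1..n}. c j = c x} \<in> P" if xn: "x \<in> {1..n}" for x
  proof -
    obtain X where X: "X \<in> P" "x \<in> X" using xn U by blast
    have "X = A \<or> X = B" using blk X by blast
    moreover have "x \<in> X" by fact
    ultimately have "X = {j \<in> {1..n}. c j = c x}" using col[OF xn] X(2) unfolding A_def B_def by auto
    then show ?thesis using X by simp
  qed
  have PAB: "P \<subseteq> {A, B}" using blk by blast
  have AB: "A \<noteq> {}" "B \<noteq> {}"
  proof -
    { assume AB0: "A = {} \<or> B = {}"
      have "1 \<in> {1..n}" using nn by simp
      then obtain X where X: "X \<in> P" "1 \<in> X" using U by blast
      have AUB: "A \<union> B = {1..n}" using col unfolding A_def B_def by blast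
      have XU: "X = {1..n}" using blk(1)[OF X(1)] X(2) AB0 AUB by auto
      have "P = {{1..n}}"
      proof
        show "P \<subseteq> {{1..n}}"
        proof
          fix Y assume Y: "Y \<in> P"
          then have "Y = A \<or> Y = B" "Y \<noteq> {}" using blk by auto
          then have "Y = {1..n}" using AB0 AUB by auto
          then show "Y \<in> {{1..n}}" by simp
        qed
      qed (use X XU in auto)
      then have False using ns by simp }
    then show "A \<noteq> {}" "B \<noteq> {}" by auto
  qed
  obtain a where a: "a \<in> A" using AB by blast
  obtain b where b: "b \<in> B" using AB by blast
  have AP: "A \<in> P" using inP[of a] a unfolding A_def by auto
  have BP: "B \<in> P" using inP[of b] b unfolding B_def by auto
  have P: "P = {A, B}" using PAB AP BP by blast
  have lt: "x < y" if x: "x \<in> A" and y: "y \<in> B" for x y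
  proof (rule ccontr)
    assume "\<not> x < y"
    moreover have "x \<noteq> y" using x y unfolding A_def B_def by auto
    ultimately have "y < x" by simp
    moreover have "\<not> same_block P y x"
      using sbeq[of y x] x y unfolding A_def B_def by auto
    ultimately show False using n2 x y U AP BP unfolding contains_p12_21_def A_def B_def by blast
  qed
  have finA: "finite A" unfolding A_def by simp
  define k where "k = Max A"
  have kA: "k \<in> A" using finA AB unfolding k_def by simp
  have kle: "\<And>x. x \<in> A \<Longrightarrow> x \<le> k" using finA unfolding k_def by simp
  have k1: "1 \<le> k" "k < n" using kA lt[OF kA b] b unfolding A_def B_def by auto
  have Aeq: "A = {1..k}"
  proof
    show "A \<subseteq> {1..k}" using kle unfolding A_def by auto
    show "{1..k} \<subseteq> A"
    proof
      fix x assume x: "x \<in> {1..k}"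
      then have xn: "x \<in> {1..n}" using k1 by auto
      show "x \<in> A"
      proof (rule ccontr)
        assume "x \<notin> A"
        then have "x \<in> B" using col[OF xn] xn unfolding A_def B_def by auto
        then have "k < x" using lt[OF kA] by blast
        then show False using x by auto
      qed
    qed
  qed
  have Beq: "B = {Suc k..n}"
  proof
    show "B \<subseteq> {Suc k..n}" using lt[OF kA] unfolding B_def by (auto simp: Suc_le_eq)
    show "{Suc k..n} \<subseteq> B"
    proof
      fix x assume x: "x \<in> {Suc k..n}"
      then have xn: "x \<in> {1..n}" using k1 by auto
      show "x \<in> B"
      proof (rule ccontr)
        assume "x \<notin> B"
        then have "x \<in> A" using col[OF xn] xn unfolding A_def B_def by auto
        then show False using kle x by fastforce
      qed
    qed
  qed
  have "c = ck n k"
  proof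
    fix i show "c i = ck n k i"
    proof (cases "i \<in> {1..n}")
      case True
      show ?thesis
      proof (cases "i \<le> k")
        case le: True
        then have "i \<in> A" using Aeq True by auto
        then show ?thesis using le True unfolding A_def ck_def by simp
      next
        case gt: False
        then have "i \<in> B" using Beq True by auto
        then show ?thesis using gt True unfolding B_def ck_def by simp
      qed
    next
      case False
      then show ?thesis using cc unfolding ck_def by (auto simp: PiE_def extensional_def)
    qed
  qed
  then show ?thesis using P Aeq Beq k1 by auto
qed

lemma bwd2:
  assumes k: "k \<in> {1..<n}"
  shows "({{1..k},{Suc k..n}}, ck n k) \<in> colored_partitions n \<and>
     \<not> contains_p11_21 ({{1..k},{Suc k..n}}, ck n k) \<and> \<not> contains_p12_21 ({{1..k},{Suc k..n}}, ck n k)"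
proof -
  have "partition_on {1..n} {{1..k},{Suc k..n}}"
    using k unfolding partition_on_def disjoint_def by auto
  moreover have "ck n k \<in> {1..n} \<rightarrow>\<^sub>E {1, 2}" unfolding ck_def by auto
  moreover have "\<not> contains_p11_21 ({{1..k},{Suc k..n}}, ck n k)"
    using k unfolding contains_p11_21_def same_block_def ck_def by auto
  moreover have "\<not> contains_p12_21 ({{1..k},{Suc k..n}}, ck n k)"
    using k unfolding contains_p12_21_def same_block_def ck_def by (auto split: if_splits)
  ultimately show ?thesis unfolding colored_partitions_def by auto
qed

lemma bwd1:
  assumes n: "1 \<le> n" and c: "c \<in> {1..n} \<rightarrow>\<^sub>E {1, 2}"
  shows "({{1..n}}, c) \<in> colored_partitions n \<and>
     \<not> contains_p11_21 ({{1..n}}, c) \<and> \<not> contains_p12_21 ({{1..n}}, c)"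
proof -
  have "partition_on {1..n} {{1..n}}"
    using n unfolding partition_on_def disjoint_def by auto
  then show ?thesis using c
    unfolding colored_partitions_def contains_p11_21_def contains_p12_21_def same_block_def by auto
qed

theorem mainTheorem2:
  fixes n :: nat
  assumes "n \<ge> 1"
  shows "card {\<sigma> \<in> colored_partitions n. \<not> contains_p11_21 \<sigma> \<and> \<not> contains_p12_21 \<sigma>}
           = 2 ^ n + n - 1"
proof -
  define S1 where "S1 = (\<lambda>c. ({{1..n}}, c)) ` ({1..n} \<rightarrow>\<^sub>E {1, 2::nat})"
  define S2 where "S2 = (\<lambda>k. ({{1..k},{Suc k..n}}, ck n k)) ` {1..<n}"
  have eq: "{\<sigma> \<in> colored_partitions n. \<not> contains_p11_21 \<sigma> \<and> \<not> contains_p12_21 \<sigma>} = S1 \<union> S2"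
  proof
    show "S1 \<union> S2 \<subseteq> {\<sigma> \<in> colored_partitions n. \<not> contains_p11_21 \<sigma> \<and> \<not> contains_p12_21 \<sigma>}"
      unfolding S1_def S2_def using bwd1[OF assms] bwd2 by auto
    show "{\<sigma> \<in> colored_partitions n. \<not> contains_p11_21 \<sigma> \<and> \<not> contains_p12_21 \<sigma>} \<subseteq> S1 \<union> S2"
    proof
      fix s assume s: "s \<in> {\<sigma> \<in> colored_partitions n. \<not> contains_p11_21 \<sigma> \<and> \<not> contains_p12_21 \<sigma>}"
      obtain P c where Pc: "s = (P, c)" by fastforce
      have pp: "partition_on {1..n} P" and cc: "c \<in> {1..n} \<rightarrow>\<^sub>E {1, 2}"
        using s Pc unfolding colored_partitions_def by auto
      show "s \<in> S1 \<union> S2"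
      proof (cases "P = {{1..n}}")
        case True then show ?thesis using Pc cc unfolding S1_def by auto
      next
        case False
        have "\<not> contains_p11_21 (P, c)" "\<not> contains_p12_21 (P, c)" using s Pc by auto
        from fwd[OF pp cc this False assms] obtain k where
          k: "k \<in> {1..<n}" "P = {{1..k},{Suc k..n}}" "c = ck n k" by blast
        then have "s = (\<lambda>k. ({{1..k},{Suc k..n}}, ck n k)) k" using Pc by simp
        then have "s \<in> S2" unfolding S2_def using k(1) by (rule image_eqI)
        then show ?thesis by simp
      qed
    qed
  qed
  have c1: "card S1 = 2 ^ n"
  proof -
    have "card S1 = card ({1..n} \<rightarrow>\<^sub>E {1, 2::nat})"
      unfolding S1_def by (rule card_image) (auto simp: inj_on_def)
    also have "\<dots> = 2 ^ n"
    proof -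
      have "card {1, 2::nat} = 2" by simp
      then show ?thesis by (simp only: card_PiE prod_constant finite_atLeastAtMost card_atLeastAtMost) simp
    qed
    finally show ?thesis .
  qed
  have c2: "card S2 = n - 1"
  proof -
    have "inj_on (\<lambda>k. ({{1..k},{Suc k..n}}, ck n k)) {1..<n}"
    proof (rule inj_onI)
      fix x y assume x: "x \<in> {1..<n}" and y: "y \<in> {1..<n}"
        and e: "({{1..x},{Suc x..n}}, ck n x) = ({{1..y},{Suc y..n}}, ck n y)"
      then have "ck n x x = ck n y x" "ck n x y = ck n y y" by auto
      moreover have "ck n x x = 1" "ck n y y = 1" using x y unfolding ck_def by auto
      moreover have "\<not> x \<le> y \<Longrightarrow> ck n y x = 2" using x unfolding ck_def by auto
      moreover have "\<not> y \<le> x \<Longrightarrow> ck n x y = 2" using y unfolding ck_def by auto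
      ultimately show "x = y" by (metis le_antisym numeral_One num.distinct(1) numeral_eq_iff)
    qed
    then show ?thesis unfolding S2_def by (simp add: card_image)
  qed
  have dj: "S1 \<inter> S2 = {}"
  proof -
    { fix k assume k: "k \<in> {1..<n}" and "{{1..n}} = {{1..k},{Suc k..n}}"
      then have "{1..k} = {1..n}" by (metis insertI1 singletonD)
      then have False using k by (metis atLeastAtMost_iff atLeastLessThan_iff le_refl less_le_not_le)
    }
    then show ?thesis unfolding S1_def S2_def by auto
  qed
  have "finite S1" unfolding S1_def by (simp add: finite_PiE)
  moreover have "finite S2" unfolding S2_def by simp
  ultimately have "card (S1 \<union> S2) = card S1 + card S2" using dj by (simp add: card_Un_disjoint)
  then show ?thesis using eq c1 c2 assms by simp
qed

end
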